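(* In the setting of the context, assume that Condition UI holds: $\mathcal{Q}$ is uniformly integrable and, for every $i\in\{1,\dots,d\}$, the set $R^i\mathcal{Q} := \{R^iZ : Z\in\mathcal{Q}\}$ is uniformly integrable. Let $\overline{\mathcal{Q}}$ be the $L^1$-closure of $\mathcal{Q}$. Then the following are equivalent: (a) the market does not admit strong $\rho$-arbitrage; (b) $\overline{\mathcal{Q}}\cap\mathcal{M}\ne\emptyset$.
   Context: Let $(\Omega,\mathcal{F},\mathbb{P})$ be a probability space and a market: riskless asset $S^0_0=1$, $S^0_1=1+r$, $r>-1$; risky assets $S^1,\dots,S^d$ with constants $S^i_0>0$ and real-valued $\mathcal{F}$-measurable $S^i_1$; returns $R^i:=(S^i_1-S^i_0)/S^i_0$. Standing assumptions: nonredundancy (if $\theta\in\mathbb{R}^{1+d}$ with $\sum_{i=0}^d\theta^iS^i_t=0$ a.s. for $t\in\{0,1\}$ then $\theta=0$), $R^i\in L^1$, $\mathbb{E}[R^i]\ne r$ for some $i$. Excess return of $\pi\in\mathbb{R}^d$: $X_\pi:=\pi\cdot(R-r\mathbf{1})$. Let $L$ be a Riesz space with $L^\infty\subset L\subset L^1$ containing all $X_\pi$. $\mathcal{D}:=\{Z\in L^1: Z\ge0 \text{ a.s.}, \mathbb{E}[Z]=1\}$. $\mathcal{Q}\subset\mathcal{D}$ is convex with $1\in\mathcal{Q}$, and $\rho:L\to(-\infty,\infty]$ is given by $\rho(X)=\sup_{Z\in\mathcal{Q}}\mathbb{E}[-ZX]$, where $\mathbb{E}[-ZX]:=\mathbb{E}[ZX^-]-\mathbb{E}[ZX^+]$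 with the convention $\mathbb{E}[-ZX]=\infty$ if $\mathbb{E}[ZX^-]=\infty$. $\mathcal{M}:=\{Z\in\mathcal{D}:\mathbb{E}[Z(R^i-r)]=0 \text{ for all } i\}$. Strong $\rho$-arbitrage: for every $\pi\in\mathbb{R}^d$ there is $\pi'$ with $\mathbb{E}[X_{\pi'}]>\mathbb{E}[X_\pi]$ and $\rho(X_{\pi'})<\rho(X_\pi)$. *)

theory Defs
  imports "HOL-Probability.Probability"
begin

definition ret :: "(nat \<Rightarrow> real) \<Rightarrow> (nat \<Rightarrow> 'a \<Rightarrow> real) \<Rightarrow> nat \<Rightarrow> 'a \<Rightarrow> real" where
  "ret S0 S1 i \<omega> = (S1 i \<omega> - S0 i) / S0 i"

definition excess :: "nat \<Rightarrow> real \<Rightarrow> (nat \<Rightarrow> 'a \<Rightarrow> real) \<Rightarrow> (nat \<Rightarrow> real) \<Rightarrow> 'a \<Rightarrow> real" where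
  "excess d r R \<pi> \<omega> = (\<Sum>i\<in>{1..d}. \<pi> i * (R i \<omega> - r))"

text \<open>Nonredundancy of the market (theta indexed by 0..d, asset 0 riskless).\<close>
definition nonredundant :: "'a measure \<Rightarrow> nat \<Rightarrow> real \<Rightarrow> (nat \<Rightarrow> real) \<Rightarrow> (nat \<Rightarrow> 'a \<Rightarrow> real) \<Rightarrow> bool" where
  "nonredundant M d r S0 S1 \<longleftrightarrow>
     (\<forall>\<theta>::nat \<Rightarrow> real.
        (\<theta> 0 + (\<Sum>i\<in>{1..d}. \<theta> i * S0 i) = 0 \<and>
         (AE \<omega> in M. \<theta> 0 * (1 + r) + (\<Sum>i\<in>{1..d}. \<theta> i * S1 i \<omega>) = 0))
        \<longrightarrow> (\<forall>i\<le>d. \<theta> i = 0))"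

definition densities :: "'a measure \<Rightarrow> ('a \<Rightarrow> real) set" where
  "densities M = {Z. integrable M Z \<and> (AE \<omega> in M. Z \<omega> \<ge> 0) \<and> integral\<^sup>L M Z = 1}"

definition mart_densities :: "'a measure \<Rightarrow> nat \<Rightarrow> real \<Rightarrow> (nat \<Rightarrow> 'a \<Rightarrow> real) \<Rightarrow> ('a \<Rightarrow> real) set" where
  "mart_densities M d r R = {Z \<in> densities M.
      \<forall>i\<in>{1..d}. integrable M (\<lambda>\<omega>. Z \<omega> * (R i \<omega> - r)) \<and>
                 (\<integral>\<omega>. Z \<omega> * (R i \<omega> - r) \<partial>M) = 0}"

text \<open>E[-ZX] := E[Z X^-] - E[Z X^+], with value +infinity whenever E[Z X^-] = infinity.\<close>
definition neg_exp :: "'a measure \<Rightarrow> ('a \<Rightarrow> real) \<Rightarrow> ('a \<Rightarrow> real) \<Rightarrow> ereal" where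
  "neg_exp M Z X =
     (let a = (\<integral>\<^sup>+ \<omega>. ennreal (Z \<omega> * max (- X \<omega>) 0) \<partial>M);
          b = (\<integral>\<^sup>+ \<omega>. ennreal (Z \<omega> * max (X \<omega>) 0) \<partial>M)
      in if a = \<infinity> then \<infinity> else enn2ereal a - enn2ereal b)"

definition rho :: "'a measure \<Rightarrow> ('a \<Rightarrow> real) set \<Rightarrow> ('a \<Rightarrow> real) \<Rightarrow> ereal" where
  "rho M Q X = (SUP Z\<in>Q. neg_exp M Z X)"

definition strong_rho_arbitrage :: "'a measure \<Rightarrow> ('a \<Rightarrow> real) set \<Rightarrow> nat \<Rightarrow> real \<Rightarrow> (nat \<Rightarrow> 'a \<Rightarrow> real) \<Rightarrow> bool" where
  "strong_rho_arbitrage M Q d r R \<longleftrightarrow>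
     (\<forall>\<pi>::nat \<Rightarrow> real. \<exists>\<pi>'::nat \<Rightarrow> real.
        (\<integral>\<omega>. excess d r R \<pi>' \<omega> \<partial>M) > (\<integral>\<omega>. excess d r R \<pi> \<omega> \<partial>M) \<and>
        rho M Q (excess d r R \<pi>') < rho M Q (excess d r R \<pi>))"

definition unif_integrable :: "'a measure \<Rightarrow> ('a \<Rightarrow> real) set \<Rightarrow> bool" where
  "unif_integrable M F \<longleftrightarrow>
     (\<forall>f\<in>F. integrable M f) \<and>
     (\<forall>e>0. \<exists>c. \<forall>f\<in>F. (\<integral>\<omega>. (if \<bar>f \<omega>\<bar> > c then \<bar>f \<omega>\<bar> else 0) \<partial>M) \<le> e)"

definition L1_closure :: "'a measure \<Rightarrow> ('a \<Rightarrow> real) set \<Rightarrow> ('a \<Rightarrow> real) set" where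
  "L1_closure M Q = {Z. integrable M Z \<and>
      (\<forall>e>0. \<exists>Y\<in>Q. (\<integral>\<omega>. \<bar>Z \<omega> - Y \<omega>\<bar> \<partial>M) < e)}"

end

theory Submission
  imports Defs
begin

lemma gid: fixes p q :: real assumes "p>0" "q>0"
  shows "1/(2*p) + 1/(2*q) - 2/(p+q) = (p-q)^2/(2*p*q*(p+q))"
proof -
  have "1/(2*p) + 1/(2*q) - 2/(p+q) = ((p+q)^2 - 4*p*q)/(2*p*q*(p+q))"
    using assms by (simp add: field_simps power2_eq_square)
  also have "(p+q)^2 - 4*p*q = (p-q)^2" by (simp add: power2_eq_square algebra_simps)
  finally show ?thesis .
qed


lemma ptw:
  fixes y z K e :: real
  assumes "0 \<le> y" "0 \<le> z" "0 < K" "0 < e"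
  shows "\<bar>y - z\<bar> \<le> e + 4*(1+K)^3/e * (1/(2*(1+\<bar>y\<bar>)) + 1/(2*(1+\<bar>z\<bar>)) - 1/(1+\<bar>1/2*y + 1/2*z\<bar>))
     + (if \<bar>y\<bar> > K then \<bar>y\<bar> else 0) + (if \<bar>z\<bar> > K then \<bar>z\<bar> else 0)"
proof -
  define g where "g = 1/(2*(1+\<bar>y\<bar>)) + 1/(2*(1+\<bar>z\<bar>)) - 1/(1+\<bar>1/2*y + 1/2*z\<bar>)"
  have geq: "g = (y-z)^2/(2*(1+y)*(1+z)*(2+y+z))"
  proof -
    have a: "\<bar>y\<bar> = y" "\<bar>z\<bar> = z" "1/(1+\<bar>1/2*y + 1/2*z\<bar>) = 2/((1+y)+(1+z))" using assms by (auto simp: field_simps)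
    have "(y-z)^2/(2*(1+y)*(1+z)*(2+y+z)) = ((1+y)-(1+z))^2/(2*(1+y)*(1+z)*((1+y)+(1+z)))"
      by (simp add: algebra_simps)
    then show ?thesis unfolding g_def a using gid[of "1+y" "1+z"] assms by simp
  qed
  have g0: "g \<ge> 0" unfolding geq using assms by simp
  have C0: "4*(1+K)^3/e * g \<ge> 0" using g0 assms by simp
  show ?thesis
  proof (cases "y > K \<or> z > K")
    case True
    have "\<bar>y - z\<bar> \<le> (if \<bar>y\<bar> > K then \<bar>y\<bar> else 0) + (if \<bar>z\<bar> > K then \<bar>z\<bar> else 0)"
      using True assms by auto
    then show ?thesis using C0 assms unfolding g_def by linarith
  next
    case False
    have w: "2*(1+y)*(1+z)*(2+y+z) \<le> 4*(1+K)^3"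
    proof -
      have "(1+y)*(1+z) \<le> (1+K)*(1+K)" using False assms by (intro mult_mono) auto
      moreover have "2+y+z \<le> 2*(1+K)" using False by auto
      ultimately have "((1+y)*(1+z))*(2+y+z) \<le> ((1+K)*(1+K))*(2*(1+K))"
        using assms False by (intro mult_mono) auto
      then show ?thesis by (simp add: power3_eq_cube algebra_simps)
    qed
    have wpos: "0 < 2*(1+y)*(1+z)*(2+y+z)" using assms by simp
    have sq: "(y-z)^2 \<le> 4*(1+K)^3 * g"
    proof -
      have "(y-z)^2 = g * (2*(1+y)*(1+z)*(2+y+z))" unfolding geq using wpos by (simp add: field_simps)
      also have "\<dots> \<le> g * (4*(1+K)^3)" using w g0 by (intro mult_left_mono) auto
      finally show ?thesis by (simp add: mult.commute)
    qed
    have amgm: "\<bar>y - z\<bar> \<le> e + (y-z)^2/e"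
    proof (cases "\<bar>y - z\<bar> \<le> e")
      case True then show ?thesis using assms by (simp add: add_increasing2)
    next
      case False
      then have "\<bar>y-z\<bar> * e \<le> \<bar>y-z\<bar>*\<bar>y-z\<bar>" by (intro mult_left_mono) auto
      then have "\<bar>y-z\<bar> \<le> (y-z)^2/e" using assms by (simp add: field_simps power2_eq_square)
      then show ?thesis using assms by linarith
    qed
    have "(y-z)^2/e \<le> 4*(1+K)^3/e * g" using sq assms by (simp add: divide_right_mono)
    then show ?thesis using amgm assms g_def by auto
  qed
qed




lemma tail_integrable:
  fixes f :: "'a \<Rightarrow> real"
  assumes "integrable M f"
  shows "integrable M (\<lambda>\<omega>. if \<bar>f \<omega>\<bar> > c then \<bar>f \<omega>\<bar> else 0)"
proof -
  have [measurable]: "f \<in> borel_measurable M" using assms by (rule borel_measurable_integrable)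
  show ?thesis
  proof (rule Bochner_Integration.integrable_bound[OF integrable_abs[OF assms]])
    show "(\<lambda>\<omega>. if \<bar>f \<omega>\<bar> > c then \<bar>f \<omega>\<bar> else 0) \<in> borel_measurable M"
      by (rule measurable_If) measurable
  qed auto
qed

lemma UI_L1bound:
  assumes "prob_space M" "unif_integrable M F"
  shows "\<exists>B. \<forall>f\<in>F. (\<integral>\<omega>. \<bar>f \<omega>\<bar> \<partial>M) \<le> B"
proof -
  interpret prob_space M by fact
  obtain c where c: "\<forall>f\<in>F. (\<integral>\<omega>. (if \<bar>f \<omega>\<bar> > c then \<bar>f \<omega>\<bar> else 0) \<partial>M) \<le> 1"
    using assms(2) unfolding unif_integrable_def by (meson zero_less_one)
  have "(\<integral>\<omega>. \<bar>f \<omega>\<bar> \<partial>M) \<le> \<bar>c\<bar> + 1" if f: "f \<in> F" for f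
  proof -
    have fi: "integrable M f" using f assms(2) unfolding unif_integrable_def by auto
    have "(\<integral>\<omega>. \<bar>f \<omega>\<bar> \<partial>M) \<le> (\<integral>\<omega>. \<bar>c\<bar> + (if \<bar>f \<omega>\<bar> > c then \<bar>f \<omega>\<bar> else 0) \<partial>M)"
      by (rule integral_mono) (auto intro!: integrable_abs fi tail_integrable)
    also have "\<dots> = \<bar>c\<bar> + (\<integral>\<omega>. (if \<bar>f \<omega>\<bar> > c then \<bar>f \<omega>\<bar> else 0) \<partial>M)"
      by (subst Bochner_Integration.integral_add) (auto intro!: tail_integrable fi simp: prob_space)
    finally show ?thesis using c f by auto
  qed
  then show ?thesis by blast
qed

lemma UAC:
  assumes "prob_space M" "unif_integrable M F" "e > 0"
  shows "\<exists>\<delta>>0. \<forall>A\<in>sets M. measure M A < \<delta> \<longrightarrow> (\<forall>f\<in>F. (\<integral>\<omega>. \<bar>f \<omega>\<bar> * indicator A \<omega> \<partial>M) \<le> e)"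
proof -
  interpret prob_space M by fact
  obtain c where c: "\<forall>f\<in>F. (\<integral>\<omega>. (if \<bar>f \<omega>\<bar> > c then \<bar>f \<omega>\<bar> else 0) \<partial>M) \<le> e/2"
    using assms(2,3) unfolding unif_integrable_def by (meson half_gt_zero)
  define \<delta> where "\<delta> = e / (2 * (\<bar>c\<bar> + 1))"
  have dpos: "\<delta> > 0" using assms(3) unfolding \<delta>_def by (simp add: add_pos_nonneg)
  have "(\<integral>\<omega>. \<bar>f \<omega>\<bar> * indicator A \<omega> \<partial>M) \<le> e" if A: "A \<in> sets M" "measure M A < \<delta>" and f: "f \<in> F" for A f
  proof -
    have fi: "integrable M f" using f assms(2) unfolding unif_integrable_def by auto
    have "(\<integral>\<omega>. \<bar>f \<omega>\<bar> * indicator A \<omega> \<partial>M) \<le> (\<integral>\<omega>. (if \<bar>f \<omega>\<bar> > c then \<bar>f \<omega>\<bar> else 0) + \<bar>c\<bar> * indicator A \<omega> \<partial>M)"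
    proof (rule integral_mono)
      show "integrable M (\<lambda>\<omega>. \<bar>f \<omega>\<bar> * indicator A \<omega>)"
        using integrable_mult_indicator[OF A(1) integrable_abs[OF fi]] by (simp add: mult.commute)
      show "integrable M (\<lambda>\<omega>. (if \<bar>f \<omega>\<bar> > c then \<bar>f \<omega>\<bar> else 0) + \<bar>c\<bar> * indicator A \<omega>)"
        using A by (intro Bochner_Integration.integrable_add tail_integrable fi integrable_mult_right integrable_real_indicator) (auto simp: less_top[symmetric])
    qed (auto simp: indicator_def)
    also have "\<dots> = (\<integral>\<omega>. (if \<bar>f \<omega>\<bar> > c then \<bar>f \<omega>\<bar> else 0) \<partial>M) + \<bar>c\<bar> * measure M A"
      using A(1) by (subst Bochner_Integration.integral_add) (auto intro!: tail_integrable fi integrable_real_indicator simp: less_top[symmetric] Int_absorb1 sets.sets_into_space)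
    also have "\<dots> \<le> e/2 + \<bar>c\<bar> * \<delta>"
      using c f A by (intro add_mono mult_left_mono) auto
    also have "\<bar>c\<bar> * \<delta> \<le> e/2"
      unfolding \<delta>_def using assms(3) by (simp add: field_simps)
    finally show ?thesis by simp
  qed
  then show ?thesis using dpos by blast
qed

lemma UI_single:
  assumes "integrable M f"
  shows "unif_integrable M {f}"
proof -
  have "((\<lambda>n. \<integral>\<omega>. (if \<bar>f \<omega>\<bar> > real n then \<bar>f \<omega>\<bar> else 0) \<partial>M) \<longlongrightarrow> (\<integral>\<omega>. 0 \<partial>M)) sequentially"
  proof (rule integral_dominated_convergence[where w="\<lambda>\<omega>. \<bar>f \<omega>\<bar>"])
    show "integrable M (\<lambda>\<omega>. \<bar>f \<omega>\<bar>)" using assms by auto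
    show "AE x in M. (\<lambda>i. if \<bar>f x\<bar> > real i then \<bar>f x\<bar> else 0) \<longlonglongrightarrow> 0"
    proof (rule AE_I2)
      fix x
      obtain N :: nat where "\<bar>f x\<bar> < real N" using reals_Archimedean2 by blast
      then have "eventually (\<lambda>i. (if \<bar>f x\<bar> > real i then \<bar>f x\<bar> else 0) = 0) sequentially"
        unfolding eventually_sequentially by (intro exI[of _ N]) auto
      then show "(\<lambda>i. if \<bar>f x\<bar> > real i then \<bar>f x\<bar> else 0) \<longlonglongrightarrow> 0"
        by (rule tendsto_eventually)
    qed
  qed (use assms in \<open>auto simp: borel_measurable_integrable\<close>)
  then have lim: "(\<lambda>n. \<integral>\<omega>. (if \<bar>f \<omega>\<bar> > real n then \<bar>f \<omega>\<bar> else 0) \<partial>M) \<longlonglongrightarrow> 0" by simp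
  have "\<exists>c. (\<integral>\<omega>. (if \<bar>f \<omega>\<bar> > c then \<bar>f \<omega>\<bar> else 0) \<partial>M) \<le> e" if "e > 0" for e
  proof -
    obtain n where "\<bar>(\<integral>\<omega>. (if \<bar>f \<omega>\<bar> > real n then \<bar>f \<omega>\<bar> else 0) \<partial>M) - 0\<bar> < e"
      using LIMSEQ_D[OF lim \<open>e>0\<close>] by (auto simp: dist_real_def)
    then show ?thesis by (intro exI[of _ "real n"]) auto
  qed
  then show ?thesis unfolding unif_integrable_def using assms by auto
qed




locale mkt = prob_space M for M :: "'a measure" +
  fixes d :: nat and r :: real and R :: "nat \<Rightarrow> 'a \<Rightarrow> real" and Q :: "('a \<Rightarrow> real) set"
  assumes Rint: "\<And>i. i \<in> {1..d} \<Longrightarrow> integrable M (R i)"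
  and Qsub: "Q \<subseteq> densities M"
  and Qconv: "\<And>Y Z t. Y \<in> Q \<Longrightarrow> Z \<in> Q \<Longrightarrow> 0 \<le> t \<Longrightarrow> t \<le> 1 \<Longrightarrow> (\<lambda>\<omega>. t * Y \<omega> + (1 - t) * Z \<omega>) \<in> Q"
  and Q1: "(\<lambda>_. 1) \<in> Q"
  and UIQ: "unif_integrable M Q"
  and UIR: "\<And>i. i \<in> {1..d} \<Longrightarrow> unif_integrable M ((\<lambda>Z \<omega>. R i \<omega> * Z \<omega>) ` Q)"
begin

definition vv where "vv i Y = (\<integral>\<omega>. Y \<omega> * (R i \<omega> - r) \<partial>M)"
definition NN where "NN Y = (\<Sum>i\<in>{1..d}. (vv i Y)^2)"
definition LL where "LL \<pi> Y = (\<Sum>i\<in>{1..d}. \<pi> i * vv i Y)"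

lemma Qprops:
  assumes "Y \<in> Q"
  shows "integrable M Y" "AE \<omega> in M. Y \<omega> \<ge> 0" "(\<integral>\<omega>. Y \<omega> \<partial>M) = 1" "Y \<in> borel_measurable M"
  using assms Qsub unfolding densities_def by auto

lemma Qabs:
  assumes "Y \<in> Q"
  shows "(\<integral>\<omega>. \<bar>Y \<omega>\<bar> \<partial>M) = 1"
proof -
  have "(\<integral>\<omega>. \<bar>Y \<omega>\<bar> \<partial>M) = (\<integral>\<omega>. Y \<omega> \<partial>M)"
    by (rule integral_cong_AE) (use Qprops[OF assms] in auto)
  then show ?thesis using Qprops[OF assms] by simp
qed

lemma RYint:
  assumes "Y \<in> Q" "i \<in> {1..d}"
  shows "integrable M (\<lambda>\<omega>. R i \<omega> * Y \<omega>)"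
  using UIR[OF assms(2)] assms(1) unfolding unif_integrable_def by auto

lemma YWint:
  assumes "Y \<in> Q" "i \<in> {1..d}"
  shows "integrable M (\<lambda>\<omega>. Y \<omega> * (R i \<omega> - r))"
proof -
  have "integrable M (\<lambda>\<omega>. R i \<omega> * Y \<omega> - r * Y \<omega>)"
    using RYint[OF assms] Qprops(1)[OF assms(1)] by auto
  then show ?thesis by (simp add: algebra_simps)
qed

lemma Rmeas: "i \<in> {1..d} \<Longrightarrow> R i \<in> borel_measurable M"
  using Rint by auto

lemma RY_bound: "\<exists>B. \<forall>Y\<in>Q. \<forall>i\<in>{1..d}. (\<integral>\<omega>. \<bar>R i \<omega> * Y \<omega>\<bar> \<partial>M) \<le> B"
proof -
  have "\<forall>i\<in>{1..d}. \<exists>B. \<forall>f\<in>(\<lambda>Z \<omega>. R i \<omega> * Z \<omega>) ` Q. (\<integral>\<omega>. \<bar>f \<omega>\<bar> \<partial>M) \<le> B"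
    using UI_L1bound[OF prob_space_axioms UIR] by blast
  then obtain Bf where Bf: "\<forall>i\<in>{1..d}. \<forall>f\<in>(\<lambda>Z \<omega>. R i \<omega> * Z \<omega>) ` Q. (\<integral>\<omega>. \<bar>f \<omega>\<bar> \<partial>M) \<le> Bf i"
    by metis
  have "(\<integral>\<omega>. \<bar>R i \<omega> * Y \<omega>\<bar> \<partial>M) \<le> (\<Sum>j\<in>{1..d}. \<bar>Bf j\<bar>)" if "Y \<in> Q" "i \<in> {1..d}" for Y i
  proof -
    have "(\<integral>\<omega>. \<bar>R i \<omega> * Y \<omega>\<bar> \<partial>M) \<le> Bf i" using Bf that by auto
    also have "\<dots> \<le> \<bar>Bf i\<bar>" by simp
    also have "\<dots> \<le> (\<Sum>j\<in>{1..d}. \<bar>Bf j\<bar>)"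
      using that(2) by (intro member_le_sum) auto
    finally show ?thesis .
  qed
  then show ?thesis by blast
qed

lemma vv_bound: "\<exists>B. \<forall>Y\<in>Q. \<forall>i\<in>{1..d}. \<bar>vv i Y\<bar> \<le> B"
proof -
  obtain B where B: "\<forall>Y\<in>Q. \<forall>i\<in>{1..d}. (\<integral>\<omega>. \<bar>R i \<omega> * Y \<omega>\<bar> \<partial>M) \<le> B"
    using RY_bound by blast
  have "\<bar>vv i Y\<bar> \<le> B + \<bar>r\<bar>" if "Y \<in> Q" "i \<in> {1..d}" for Y i
  proof -
    have "\<bar>vv i Y\<bar> \<le> (\<integral>\<omega>. \<bar>Y \<omega> * (R i \<omega> - r)\<bar> \<partial>M)"
      unfolding vv_def by (rule integral_abs_bound)
    also have "\<dots> \<le> (\<integral>\<omega>. \<bar>R i \<omega> * Y \<omega>\<bar> + \<bar>r\<bar> * \<bar>Y \<omega>\<bar> \<partial>M)"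
    proof (rule integral_mono)
      show "integrable M (\<lambda>\<omega>. \<bar>Y \<omega> * (R i \<omega> - r)\<bar>)" using YWint[OF that] by auto
      show "integrable M (\<lambda>\<omega>. \<bar>R i \<omega> * Y \<omega>\<bar> + \<bar>r\<bar> * \<bar>Y \<omega>\<bar>)"
        using RYint[OF that] Qprops(1)[OF that(1)] by auto
      fix \<omega> show "\<bar>Y \<omega> * (R i \<omega> - r)\<bar> \<le> \<bar>R i \<omega> * Y \<omega>\<bar> + \<bar>r\<bar> * \<bar>Y \<omega>\<bar>"
        by (simp add: algebra_simps abs_mult[symmetric] abs_triangle_ineq4)
    qed
    also have "\<dots> = (\<integral>\<omega>. \<bar>R i \<omega> * Y \<omega>\<bar> \<partial>M) + \<bar>r\<bar> * (\<integral>\<omega>. \<bar>Y \<omega>\<bar> \<partial>M)"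
      using RYint[OF that] Qprops(1)[OF that(1)] by simp
    also have "\<dots> \<le> B + \<bar>r\<bar>" using B that Qabs[OF that(1)] by auto
    finally show ?thesis .
  qed
  then show ?thesis by blast
qed

lemma vv_affine:
  assumes "Y \<in> Q" "Z \<in> Q" "i \<in> {1..d}"
  shows "vv i (\<lambda>\<omega>. t * Y \<omega> + (1 - t) * Z \<omega>) = t * vv i Y + (1 - t) * vv i Z"
proof -
  have "vv i (\<lambda>\<omega>. t * Y \<omega> + (1 - t) * Z \<omega>) =
     (\<integral>\<omega>. t * (Y \<omega> * (R i \<omega> - r)) + (1 - t) * (Z \<omega> * (R i \<omega> - r)) \<partial>M)"
    unfolding vv_def by (rule Bochner_Integration.integral_cong) (auto simp: algebra_simps)
  also have "\<dots> = t * vv i Y + (1 - t) * vv i Z"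
    unfolding vv_def using YWint[OF assms(1,3)] YWint[OF assms(2,3)] by simp
  finally show ?thesis .
qed

lemma excess_int:
  assumes "Y \<in> Q"
  shows "integrable M (\<lambda>\<omega>. Y \<omega> * excess d r R \<pi> \<omega>)"
    and "(\<integral>\<omega>. Y \<omega> * excess d r R \<pi> \<omega> \<partial>M) = LL \<pi> Y"
proof -
  have eq: "(\<lambda>\<omega>. Y \<omega> * excess d r R \<pi> \<omega>) = (\<lambda>\<omega>. \<Sum>i\<in>{1..d}. \<pi> i * (Y \<omega> * (R i \<omega> - r)))"
    unfolding excess_def by (auto simp: sum_distrib_left algebra_simps)
  show "integrable M (\<lambda>\<omega>. Y \<omega> * excess d r R \<pi> \<omega>)"
    unfolding eq using YWint[OF assms] by (intro Bochner_Integration.integrable_sum integrable_mult_right) auto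
  show "(\<integral>\<omega>. Y \<omega> * excess d r R \<pi> \<omega> \<partial>M) = LL \<pi> Y"
    unfolding eq LL_def vv_def using YWint[OF assms]
    by (subst Bochner_Integration.integral_sum) (auto intro!: integrable_mult_right)
qed

lemma excess_meas: "excess d r R \<pi> \<in> borel_measurable M"
  unfolding excess_def using Rmeas by (intro borel_measurable_sum) auto

lemma Eexcess: "(\<integral>\<omega>. excess d r R \<pi> \<omega> \<partial>M) = LL \<pi> (\<lambda>_. 1)"
  using excess_int(2)[OF Q1, of \<pi>] by simp

lemma negexp:
  assumes "Y \<in> Q"
  shows "neg_exp M Y (excess d r R \<pi>) = ereal (- LL \<pi> Y)"
proof -
  define X where "X = excess d r R \<pi>"
  have Xm[measurable]: "X \<in> borel_measurable M" unfolding X_def by (rule excess_meas)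
  have Ym[measurable]: "Y \<in> borel_measurable M" using Qprops(4)[OF assms] .
  have YX: "integrable M (\<lambda>\<omega>. Y \<omega> * X \<omega>)" unfolding X_def by (rule excess_int(1)[OF assms])
  have i1: "integrable M (\<lambda>\<omega>. Y \<omega> * max (- X \<omega>) 0)"
    by (rule Bochner_Integration.integrable_bound[OF YX]) (auto simp: abs_mult intro!: mult_left_mono)
  have i2: "integrable M (\<lambda>\<omega>. Y \<omega> * max (X \<omega>) 0)"
    by (rule Bochner_Integration.integrable_bound[OF YX]) (auto simp: abs_mult intro!: mult_left_mono)
  have a: "(\<integral>\<^sup>+ \<omega>. ennreal (Y \<omega> * max (- X \<omega>) 0) \<partial>M) = ennreal (\<integral>\<omega>. Y \<omega> * max (- X \<omega>) 0 \<partial>M)"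
    by (rule nn_integral_eq_integral[OF i1]) (use Qprops(2)[OF assms] in auto)
  have b: "(\<integral>\<^sup>+ \<omega>. ennreal (Y \<omega> * max (X \<omega>) 0) \<partial>M) = ennreal (\<integral>\<omega>. Y \<omega> * max (X \<omega>) 0 \<partial>M)"
    by (rule nn_integral_eq_integral[OF i2]) (use Qprops(2)[OF assms] in auto)
  have a0: "(\<integral>\<omega>. Y \<omega> * max (- X \<omega>) 0 \<partial>M) \<ge> 0"
    by (rule integral_nonneg_AE) (use Qprops(2)[OF assms] in auto)
  have b0: "(\<integral>\<omega>. Y \<omega> * max (X \<omega>) 0 \<partial>M) \<ge> 0"
    by (rule integral_nonneg_AE) (use Qprops(2)[OF assms] in auto)
  have diff: "(\<integral>\<omega>. Y \<omega> * max (- X \<omega>) 0 \<partial>M) - (\<integral>\<omega>. Y \<omega> * max (X \<omega>) 0 \<partial>M) = - (\<integral>\<omega>. Y \<omega> * X \<omega> \<partial>M)"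
  proof -
    have "(\<integral>\<omega>. Y \<omega> * max (- X \<omega>) 0 \<partial>M) - (\<integral>\<omega>. Y \<omega> * max (X \<omega>) 0 \<partial>M)
        = (\<integral>\<omega>. Y \<omega> * max (- X \<omega>) 0 - Y \<omega> * max (X \<omega>) 0 \<partial>M)"
      using i1 i2 by simp
    also have "\<dots> = (\<integral>\<omega>. - (Y \<omega> * X \<omega>) \<partial>M)"
      by (rule Bochner_Integration.integral_cong) (auto simp: max_def algebra_simps)
    finally show ?thesis by simp
  qed
  have "neg_exp M Y X = ereal (- (\<integral>\<omega>. Y \<omega> * X \<omega> \<partial>M))"
    unfolding neg_exp_def Let_def a b using a0 b0 diff by simp
  then show ?thesis unfolding X_def excess_int(2)[OF assms] .
qed

end



context mkt begin

lemma YW_bound: "\<exists>B. \<forall>Y\<in>Q. \<forall>i\<in>{1..d}. (\<integral>\<omega>. \<bar>Y \<omega> * (R i \<omega> - r)\<bar> \<partial>M) \<le> B"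
proof -
  obtain B where B: "\<forall>Y\<in>Q. \<forall>i\<in>{1..d}. (\<integral>\<omega>. \<bar>R i \<omega> * Y \<omega>\<bar> \<partial>M) \<le> B"
    using RY_bound by blast
  have "(\<integral>\<omega>. \<bar>Y \<omega> * (R i \<omega> - r)\<bar> \<partial>M) \<le> B + \<bar>r\<bar>" if "Y \<in> Q" "i \<in> {1..d}" for Y i
  proof -
    have "(\<integral>\<omega>. \<bar>Y \<omega> * (R i \<omega> - r)\<bar> \<partial>M) \<le> (\<integral>\<omega>. \<bar>R i \<omega> * Y \<omega>\<bar> + \<bar>r\<bar> * \<bar>Y \<omega>\<bar> \<partial>M)"
    proof (rule integral_mono)
      show "integrable M (\<lambda>\<omega>. \<bar>Y \<omega> * (R i \<omega> - r)\<bar>)" using YWint[OF that] by auto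
      show "integrable M (\<lambda>\<omega>. \<bar>R i \<omega> * Y \<omega>\<bar> + \<bar>r\<bar> * \<bar>Y \<omega>\<bar>)"
        using RYint[OF that] Qprops(1)[OF that(1)] by auto
      fix \<omega> show "\<bar>Y \<omega> * (R i \<omega> - r)\<bar> \<le> \<bar>R i \<omega> * Y \<omega>\<bar> + \<bar>r\<bar> * \<bar>Y \<omega>\<bar>"
        by (simp add: algebra_simps abs_mult[symmetric] abs_triangle_ineq4)
    qed
    also have "\<dots> = (\<integral>\<omega>. \<bar>R i \<omega> * Y \<omega>\<bar> \<partial>M) + \<bar>r\<bar> * (\<integral>\<omega>. \<bar>Y \<omega>\<bar> \<partial>M)"
      using RYint[OF that] Qprops(1)[OF that(1)] by simp
    also have "\<dots> \<le> B + \<bar>r\<bar>" using B that Qabs[OF that(1)] by auto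
    finally show ?thesis .
  qed
  then show ?thesis by blast
qed

lemma conv:
  assumes Ys: "\<And>n. Ys n \<in> Q" and Zi: "integrable M Z"
    and ZW: "integrable M (\<lambda>\<omega>. Z \<omega> * (R i \<omega> - r))"
    and lim: "(\<lambda>n. \<integral>\<omega>. \<bar>Ys n \<omega> - Z \<omega>\<bar> \<partial>M) \<longlonglongrightarrow> 0"
    and i: "i \<in> {1..d}"
  shows "(\<lambda>n. vv i (Ys n)) \<longlonglongrightarrow> (\<integral>\<omega>. Z \<omega> * (R i \<omega> - r) \<partial>M)"
proof (rule LIMSEQ_I)
  fix e :: real assume e: "e > 0"
  define e' where "e' = e / (4 + \<bar>r\<bar>)"
  have e': "e' > 0" unfolding e'_def using e by (simp add: add_pos_nonneg)
  obtain \<delta>1 where d1: "\<delta>1 > 0" "\<forall>A\<in>sets M. measure M A < \<delta>1 \<longrightarrow> (\<forall>f\<in>(\<lambda>Z \<omega>. R i \<omega> * Z \<omega>) ` Q. (\<integral>\<omega>. \<bar>f \<omega>\<bar> * indicator A \<omega> \<partial>M) \<le> e')"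
    using UAC[OF prob_space_axioms UIR[OF i] e'] by blast
  obtain \<delta>2 where d2: "\<delta>2 > 0" "\<forall>A\<in>sets M. measure M A < \<delta>2 \<longrightarrow> (\<forall>f\<in>Q. (\<integral>\<omega>. \<bar>f \<omega>\<bar> * indicator A \<omega> \<partial>M) \<le> e')"
    using UAC[OF prob_space_axioms UIQ e'] by blast
  obtain \<delta>3 where d3: "\<delta>3 > 0" "\<forall>A\<in>sets M. measure M A < \<delta>3 \<longrightarrow> (\<forall>f\<in>{\<lambda>\<omega>. Z \<omega> * (R i \<omega> - r)}. (\<integral>\<omega>. \<bar>f \<omega>\<bar> * indicator A \<omega> \<partial>M) \<le> e')"
    using UAC[OF prob_space_axioms UI_single[OF ZW] e'] by blast
  define \<delta> where "\<delta> = min \<delta>1 (min \<delta>2 \<delta>3)"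
  have dpos: "\<delta> > 0" unfolding \<delta>_def using d1 d2 d3 by simp
  define W where "W = (\<lambda>\<omega>. R i \<omega> - r)"
  have Wi: "integrable M W" unfolding W_def using Rint[OF i] by auto
  have Wm[measurable]: "W \<in> borel_measurable M" using Wi by auto
  define c where "c = ((\<integral>\<omega>. \<bar>W \<omega>\<bar> \<partial>M) + 1) / \<delta>"
  have cpos: "c > 0" unfolding c_def using dpos by (simp add: add_nonneg_pos)
  define A where "A = {\<omega>\<in>space M. c \<le> \<bar>W \<omega>\<bar>}"
  have Am[measurable]: "A \<in> sets M" unfolding A_def by measurable
  have "measure M A \<le> (\<integral>\<omega>. \<bar>W \<omega>\<bar> \<partial>M) / c"
    unfolding A_def by (rule integral_Markov_inequality_measure[where A="space M"]) (use Wi cpos in auto)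
  also have "\<dots> < \<delta>"
  proof -
    have W0: "(\<integral>\<omega>. \<bar>W \<omega>\<bar> \<partial>M) \<ge> 0" by simp
    have "\<And>I \<delta>::real. I \<ge> 0 \<Longrightarrow> \<delta> > 0 \<Longrightarrow> I / ((I + 1) / \<delta>) < \<delta>"
    proof -
      fix I \<delta> :: real assume "I \<ge> 0" "\<delta> > 0"
      then have "I / ((I + 1) / \<delta>) = \<delta> * (I / (I + 1))" by (simp add: field_simps)
      also have "\<dots> < \<delta> * 1" using \<open>I \<ge> 0\<close> \<open>\<delta> > 0\<close> by (intro mult_strict_left_mono) auto
      finally show "I / ((I + 1) / \<delta>) < \<delta>" by simp
    qed
    then show ?thesis unfolding c_def using dpos W0 by blast
  qed
  finally have mA: "measure M A < \<delta>" .
  have key: "\<bar>vv i Y - (\<integral>\<omega>. Z \<omega> * (R i \<omega> - r) \<partial>M)\<bar> \<le> c * (\<integral>\<omega>. \<bar>Y \<omega> - Z \<omega>\<bar> \<partial>M) + (2 + \<bar>r\<bar>) * e'"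
    if Y: "Y \<in> Q" for Y
  proof -
    have Yi: "integrable M Y" using Qprops(1)[OF Y] .
    have RY: "integrable M (\<lambda>\<omega>. R i \<omega> * Y \<omega>)" using RYint[OF Y i] .
    have i1: "integrable M (\<lambda>\<omega>. \<bar>R i \<omega> * Y \<omega>\<bar> * indicator A \<omega>)"
      using integrable_mult_indicator[OF Am integrable_abs[OF RY]] by (simp add: mult.commute)
    have i2: "integrable M (\<lambda>\<omega>. \<bar>Y \<omega>\<bar> * indicator A \<omega>)"
      using integrable_mult_indicator[OF Am integrable_abs[OF Yi]] by (simp add: mult.commute)
    have i3: "integrable M (\<lambda>\<omega>. \<bar>Z \<omega> * (R i \<omega> - r)\<bar> * indicator A \<omega>)"
      using integrable_mult_indicator[OF Am integrable_abs[OF ZW]] by (simp add: mult.commute)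
    have i4: "integrable M (\<lambda>\<omega>. \<bar>Y \<omega> - Z \<omega>\<bar>)" using Yi Zi by auto
    have "vv i Y - (\<integral>\<omega>. Z \<omega> * (R i \<omega> - r) \<partial>M) = (\<integral>\<omega>. Y \<omega> * (R i \<omega> - r) - Z \<omega> * (R i \<omega> - r) \<partial>M)"
      unfolding vv_def using YWint[OF Y i] ZW by simp
    then have "\<bar>vv i Y - (\<integral>\<omega>. Z \<omega> * (R i \<omega> - r) \<partial>M)\<bar> \<le> (\<integral>\<omega>. \<bar>Y \<omega> * (R i \<omega> - r) - Z \<omega> * (R i \<omega> - r)\<bar> \<partial>M)"
      by (simp add: integral_abs_bound)
    also have "\<dots> \<le> (\<integral>\<omega>. c * \<bar>Y \<omega> - Z \<omega>\<bar> + (\<bar>R i \<omega> * Y \<omega>\<bar> * indicator A \<omega> + \<bar>r\<bar> * (\<bar>Y \<omega>\<bar> * indicator A \<omega>) + \<bar>Z \<omega> * (R i \<omega> - r)\<bar> * indicator A \<omega>) \<partial>M)"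
    proof (rule integral_mono)
      show "integrable M (\<lambda>\<omega>. \<bar>Y \<omega> * (R i \<omega> - r) - Z \<omega> * (R i \<omega> - r)\<bar>)"
        using YWint[OF Y i] ZW by auto
      show "integrable M (\<lambda>\<omega>. c * \<bar>Y \<omega> - Z \<omega>\<bar> + (\<bar>R i \<omega> * Y \<omega>\<bar> * indicator A \<omega> + \<bar>r\<bar> * (\<bar>Y \<omega>\<bar> * indicator A \<omega>) + \<bar>Z \<omega> * (R i \<omega> - r)\<bar> * indicator A \<omega>))"
        using i1 i2 i3 i4 by auto
      fix \<omega> assume "\<omega> \<in> space M"
      show "\<bar>Y \<omega> * (R i \<omega> - r) - Z \<omega> * (R i \<omega> - r)\<bar> \<le> c * \<bar>Y \<omega> - Z \<omega>\<bar> + (\<bar>R i \<omega> * Y \<omega>\<bar> * indicator A \<omega> + \<bar>r\<bar> * (\<bar>Y \<omega>\<bar> * indicator A \<omega>) + \<bar>Z \<omega> * (R i \<omega> - r)\<bar> * indicator A \<omega>)"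
      proof (cases "\<omega> \<in> A")
        case True
        have "\<bar>Y \<omega> * (R i \<omega> - r) - Z \<omega> * (R i \<omega> - r)\<bar> \<le> \<bar>Y \<omega> * (R i \<omega> - r)\<bar> + \<bar>Z \<omega> * (R i \<omega> - r)\<bar>"
          by (rule abs_triangle_ineq4)
        also have "\<bar>Y \<omega> * (R i \<omega> - r)\<bar> \<le> \<bar>R i \<omega> * Y \<omega>\<bar> + \<bar>r\<bar> * \<bar>Y \<omega>\<bar>"
          by (simp add: algebra_simps abs_mult[symmetric] abs_triangle_ineq4)
        finally have "\<bar>Y \<omega> * (R i \<omega> - r) - Z \<omega> * (R i \<omega> - r)\<bar> \<le> \<bar>R i \<omega> * Y \<omega>\<bar> + \<bar>r\<bar> * \<bar>Y \<omega>\<bar> + \<bar>Z \<omega> * (R i \<omega> - r)\<bar>" by simp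
        moreover have "0 \<le> c * \<bar>Y \<omega> - Z \<omega>\<bar>" using cpos by simp
        ultimately show ?thesis using True by simp
      next
        case False
        then have "\<bar>W \<omega>\<bar> < c" using \<open>\<omega> \<in> space M\<close> unfolding A_def by auto
        then have "\<bar>Y \<omega> * (R i \<omega> - r) - Z \<omega> * (R i \<omega> - r)\<bar> \<le> c * \<bar>Y \<omega> - Z \<omega>\<bar>"
        proof -
          have "\<bar>Y \<omega> * (R i \<omega> - r) - Z \<omega> * (R i \<omega> - r)\<bar> = \<bar>W \<omega>\<bar> * \<bar>Y \<omega> - Z \<omega>\<bar>"
            unfolding W_def by (simp add: left_diff_distrib[symmetric] abs_mult mult.commute)
          also have "\<dots> \<le> c * \<bar>Y \<omega> - Z \<omega>\<bar>" using \<open>\<bar>W \<omega>\<bar> < c\<close> by (intro mult_right_mono) auto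
          finally show ?thesis .
        qed
        then show ?thesis using False by simp
      qed
    qed
    also have "\<dots> = c * (\<integral>\<omega>. \<bar>Y \<omega> - Z \<omega>\<bar> \<partial>M) + ((\<integral>\<omega>. \<bar>R i \<omega> * Y \<omega>\<bar> * indicator A \<omega> \<partial>M) + \<bar>r\<bar> * (\<integral>\<omega>. \<bar>Y \<omega>\<bar> * indicator A \<omega> \<partial>M) + (\<integral>\<omega>. \<bar>Z \<omega> * (R i \<omega> - r)\<bar> * indicator A \<omega> \<partial>M))"
      using i1 i2 i3 i4 by simp
    also have "\<dots> \<le> c * (\<integral>\<omega>. \<bar>Y \<omega> - Z \<omega>\<bar> \<partial>M) + (e' + \<bar>r\<bar> * e' + e')"
    proof -
      have "(\<integral>\<omega>. \<bar>R i \<omega> * Y \<omega>\<bar> * indicator A \<omega> \<partial>M) \<le> e'"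
        using d1(2) Am mA Y unfolding \<delta>_def by auto
      moreover have "(\<integral>\<omega>. \<bar>Y \<omega>\<bar> * indicator A \<omega> \<partial>M) \<le> e'"
        using d2(2) Am mA Y unfolding \<delta>_def by auto
      moreover have "(\<integral>\<omega>. \<bar>Z \<omega> * (R i \<omega> - r)\<bar> * indicator A \<omega> \<partial>M) \<le> e'"
        using d3(2) Am mA unfolding \<delta>_def by auto
      ultimately show ?thesis by (intro add_left_mono add_mono mult_left_mono) auto
    qed
    finally show ?thesis by (simp add: algebra_simps)
  qed
  have "eventually (\<lambda>n. (\<integral>\<omega>. \<bar>Ys n \<omega> - Z \<omega>\<bar> \<partial>M) < e' / c) sequentially"
    using order_tendstoD(2)[OF lim] e' cpos by simp
  then obtain N where N: "\<And>n. n \<ge> N \<Longrightarrow> (\<integral>\<omega>. \<bar>Ys n \<omega> - Z \<omega>\<bar> \<partial>M) < e' / c"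
    unfolding eventually_sequentially by blast
  have "norm (vv i (Ys n) - (\<integral>\<omega>. Z \<omega> * (R i \<omega> - r) \<partial>M)) < e" if "n \<ge> N" for n
  proof -
    have "c * (\<integral>\<omega>. \<bar>Ys n \<omega> - Z \<omega>\<bar> \<partial>M) < c * (e' / c)"
      using N[OF that] cpos by (intro mult_strict_left_mono) auto
    then have "c * (\<integral>\<omega>. \<bar>Ys n \<omega> - Z \<omega>\<bar> \<partial>M) < e'" using cpos by simp
    moreover have "(4 + \<bar>r\<bar>) * e' = e" unfolding e'_def by (simp add: add_pos_nonneg)
    ultimately show ?thesis using key[OF Ys[of n]] e' by (simp add: algebra_simps; linarith)
  qed
  then show "\<exists>N. \<forall>n\<ge>N. norm (vv i (Ys n) - (\<integral>\<omega>. Z \<omega> * (R i \<omega> - r) \<partial>M)) < e" by blast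
qed

end



context mkt begin

lemma rho_eq: "rho M Q (excess d r R \<pi>) = (SUP Y\<in>Q. ereal (- LL \<pi> Y))"
  unfolding rho_def using negexp by (intro SUP_cong) auto

lemma LL_bound: "\<exists>K. \<forall>Y\<in>Q. \<bar>LL \<pi> Y\<bar> \<le> K"
proof -
  obtain B where B: "\<forall>Y\<in>Q. \<forall>i\<in>{1..d}. \<bar>vv i Y\<bar> \<le> B" using vv_bound by blast
  have "\<bar>LL \<pi> Y\<bar> \<le> (\<Sum>i\<in>{1..d}. \<bar>\<pi> i\<bar> * B)" if "Y \<in> Q" for Y
  proof -
    have "\<bar>LL \<pi> Y\<bar> \<le> (\<Sum>i\<in>{1..d}. \<bar>\<pi> i * vv i Y\<bar>)" unfolding LL_def by (rule sum_abs)
    also have "\<dots> \<le> (\<Sum>i\<in>{1..d}. \<bar>\<pi> i\<bar> * B)"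
      using B that by (intro sum_mono) (auto simp: abs_mult intro!: mult_left_mono)
    finally show ?thesis .
  qed
  then show ?thesis by blast
qed

lemma LL_add: "LL (\<lambda>i. \<pi> i + \<pi>0 i) Y = LL \<pi> Y + LL \<pi>0 Y"
  unfolding LL_def by (simp add: sum.distrib algebra_simps)

lemma arb:
  assumes m: "m > 0" and pos: "\<forall>Y\<in>Q. LL \<pi>0 Y \<ge> m"
  shows "strong_rho_arbitrage M Q d r R"
  unfolding strong_rho_arbitrage_def
proof
  fix \<pi> :: "nat \<Rightarrow> real"
  define \<pi>' where "\<pi>' = (\<lambda>i. \<pi> i + \<pi>0 i)"
  have E: "(\<integral>\<omega>. excess d r R \<pi>' \<omega> \<partial>M) > (\<integral>\<omega>. excess d r R \<pi> \<omega> \<partial>M)"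
    unfolding Eexcess \<pi>'_def LL_add using pos Q1 m by force
  obtain K where K: "\<forall>Y\<in>Q. \<bar>LL \<pi> Y\<bar> \<le> K" using LL_bound by blast
  define s where "s = (SUP Y\<in>Q. ereal (- LL \<pi> Y))"
  have s_le: "s \<le> ereal K" unfolding s_def using K by (intro SUP_least) auto
  have s_ge: "ereal (- LL \<pi> (\<lambda>_. 1)) \<le> s" unfolding s_def using Q1 by (intro SUP_upper) auto
  obtain q where q: "s = ereal q" using s_le s_ge by (cases s) auto
  have "(SUP Y\<in>Q. ereal (- LL \<pi>' Y)) \<le> ereal (q - m)"
  proof (rule SUP_least)
    fix Y assume Y: "Y \<in> Q"
    have "ereal (- LL \<pi> Y) \<le> s" unfolding s_def using Y by (intro SUP_upper) auto
    then have "- LL \<pi> Y \<le> q" using q by simp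
    moreover have "LL \<pi>0 Y \<ge> m" using pos Y by blast
    ultimately show "ereal (- LL \<pi>' Y) \<le> ereal (q - m)"
      unfolding \<pi>'_def LL_add by simp
  qed
  also have "\<dots> < ereal q" using m by simp
  finally have "rho M Q (excess d r R \<pi>') < rho M Q (excess d r R \<pi>)"
    unfolding rho_eq using q s_def by simp
  with E show "\<exists>\<pi>'. (\<integral>\<omega>. excess d r R \<pi>' \<omega> \<partial>M) > (\<integral>\<omega>. excess d r R \<pi> \<omega> \<partial>M) \<and>
        rho M Q (excess d r R \<pi>') < rho M Q (excess d r R \<pi>)" by blast
qed

lemma noarb:
  assumes "L1_closure M Q \<inter> mart_densities M d r R \<noteq> {}"
  shows "\<not> strong_rho_arbitrage M Q d r R"
proof
  assume sa: "strong_rho_arbitrage M Q d r R"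
  obtain Z where Zc: "Z \<in> L1_closure M Q" and Zm: "Z \<in> mart_densities M d r R" using assms by blast
  have Zi: "integrable M Z" using Zc unfolding L1_closure_def by auto
  have "\<forall>n. \<exists>Y\<in>Q. (\<integral>\<omega>. \<bar>Z \<omega> - Y \<omega>\<bar> \<partial>M) < 1 / real (Suc n)"
    using Zc unfolding L1_closure_def by auto
  then obtain Ys where Ys: "\<And>n. Ys n \<in> Q" "\<And>n. (\<integral>\<omega>. \<bar>Z \<omega> - Ys n \<omega>\<bar> \<partial>M) < 1 / real (Suc n)"
    by metis
  have lim: "(\<lambda>n. \<integral>\<omega>. \<bar>Ys n \<omega> - Z \<omega>\<bar> \<partial>M) \<longlonglongrightarrow> 0"
  proof (rule tendsto_sandwich[where f="\<lambda>_. 0" and h="\<lambda>n. 1 / real (Suc n)"])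
    show "\<forall>\<^sub>F n in sequentially. 0 \<le> (\<integral>\<omega>. \<bar>Ys n \<omega> - Z \<omega>\<bar> \<partial>M)" by simp
    show "\<forall>\<^sub>F n in sequentially. (\<integral>\<omega>. \<bar>Ys n \<omega> - Z \<omega>\<bar> \<partial>M) \<le> 1 / real (Suc n)"
      using Ys(2) by (simp add: abs_minus_commute less_imp_le)
    show "(\<lambda>n. 1 / real (Suc n)) \<longlonglongrightarrow> 0" using LIMSEQ_inverse_real_of_nat by (simp add: inverse_eq_divide)
  qed simp
  have vlim: "(\<lambda>n. vv i (Ys n)) \<longlonglongrightarrow> 0" if i: "i \<in> {1..d}" for i
  proof -
    have "integrable M (\<lambda>\<omega>. Z \<omega> * (R i \<omega> - r))" "(\<integral>\<omega>. Z \<omega> * (R i \<omega> - r) \<partial>M) = 0"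
      using Zm i unfolding mart_densities_def by auto
    then show ?thesis using conv[OF Ys(1) Zi _ lim i] by simp
  qed
  obtain \<pi>' where p': "rho M Q (excess d r R \<pi>') < rho M Q (excess d r R (\<lambda>_. 0))"
    using sa unfolding strong_rho_arbitrage_def by blast
  have r0: "rho M Q (excess d r R (\<lambda>_. 0)) = 0"
  proof -
    have "Q \<noteq> {}" using Q1 by auto
    then show ?thesis unfolding rho_eq LL_def by (simp add: SUP_const)
  qed
  have Llim: "(\<lambda>n. ereal (- LL \<pi>' (Ys n))) \<longlonglongrightarrow> ereal 0"
  proof -
    have "(\<lambda>n. LL \<pi>' (Ys n)) \<longlonglongrightarrow> (\<Sum>i\<in>{1..d}. \<pi>' i * 0)"
      unfolding LL_def by (intro tendsto_sum tendsto_mult tendsto_const vlim) auto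
    then have "(\<lambda>n. - LL \<pi>' (Ys n)) \<longlonglongrightarrow> 0" using tendsto_minus by fastforce
    then show ?thesis by (rule tendsto_ereal)
  qed
  have "ereal 0 \<le> rho M Q (excess d r R \<pi>')"
  proof (rule LIMSEQ_le_const2[OF Llim])
    show "\<exists>N. \<forall>n\<ge>N. ereal (- LL \<pi>' (Ys n)) \<le> rho M Q (excess d r R \<pi>')"
      unfolding rho_eq using Ys(1) by (auto intro!: SUP_upper)
  qed
  then show False using p' r0 by (simp add: zero_ereal_def)
qed

end



context mkt begin

lemma NN_nonneg: "NN Y \<ge> 0" unfolding NN_def by (auto intro!: sum_nonneg)

lemma caseB:
  assumes dpos: "\<delta> > 0" and NNgt: "\<forall>Y\<in>Q. NN Y > \<delta>"
  shows "\<exists>\<pi>0 m. m > 0 \<and> (\<forall>Y\<in>Q. LL \<pi>0 Y \<ge> m)"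
proof -
  have Qne: "Q \<noteq> {}" using Q1 by auto
  define m where "m = Inf (NN ` Q)"
  have bdd: "bdd_below (NN ` Q)" using NN_nonneg by (auto intro!: bdd_belowI[of _ 0])
  have m_le: "\<And>Y. Y \<in> Q \<Longrightarrow> m \<le> NN Y" unfolding m_def using bdd by (auto intro: cInf_lower)
  have m_ge: "\<delta> \<le> m" unfolding m_def using Qne NNgt by (intro cInf_greatest) (auto simp: less_imp_le)
  have mpos: "m > 0" using m_ge dpos by simp
  obtain B where B: "\<forall>Y\<in>Q. \<forall>i\<in>{1..d}. \<bar>vv i Y\<bar> \<le> B" using vv_bound by blast
  define D2 where "D2 = 4 * real d * B^2 + 1"
  have D2pos: "D2 > 0" unfolding D2_def by (simp add: add_nonneg_pos)
  define t where "t = min 1 (m / (4 * D2))"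
  have t: "0 < t" "t \<le> 1" "t \<le> m / (4 * D2)" unfolding t_def using mpos D2pos by auto
  define \<eta> where "\<eta> = t * m / 2"
  have eta: "\<eta> > 0" unfolding \<eta>_def using t mpos by simp
  obtain Y0 where Y0: "Y0 \<in> Q" "NN Y0 < m + \<eta>"
    using cInf_lessD[of "NN ` Q" "m + \<eta>"] Qne eta unfolding m_def by auto
  define \<pi>0 where "\<pi>0 = (\<lambda>i. vv i Y0)"
  have "LL \<pi>0 Y \<ge> m / 2" if Y: "Y \<in> Q" for Y
  proof -
    define e where "e i = vv i Y - vv i Y0" for i
    define S1 where "S1 = (\<Sum>i\<in>{1..d}. vv i Y0 * e i)"
    define S2 where "S2 = (\<Sum>i\<in>{1..d}. (e i)^2)"
    have S2ge: "S2 \<ge> 0" unfolding S2_def by (auto intro!: sum_nonneg)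
    have S2le: "S2 \<le> D2"
    proof -
      have "(e i)^2 \<le> 4 * B^2" if i: "i \<in> {1..d}" for i
      proof -
        have b1: "\<bar>vv i Y\<bar> \<le> B" using B Y i by blast
        have b2: "\<bar>vv i Y0\<bar> \<le> B" using B Y0(1) i by blast
        have "\<bar>e i\<bar> \<le> 2 * B" unfolding e_def using b1 b2 by linarith
        then have "\<bar>e i\<bar>^2 \<le> (2 * B)^2" by (intro power_mono) auto
        then show ?thesis by (simp add: power_mult_distrib)
      qed
      then have "S2 \<le> of_nat (card {1..d}) * (4 * B^2)" unfolding S2_def by (rule sum_bounded_above)
      then show ?thesis unfolding D2_def by simp
    qed
    define Yt where "Yt = (\<lambda>\<omega>. t * Y \<omega> + (1 - t) * Y0 \<omega>)"
    have YtQ: "Yt \<in> Q" unfolding Yt_def using Qconv[OF Y Y0(1)] t by auto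
    have "NN Yt = (\<Sum>i\<in>{1..d}. (vv i Y0)^2 + 2*t*(vv i Y0 * e i) + t^2 * (e i)^2)"
      unfolding NN_def
    proof (intro sum.cong refl)
      fix i assume i: "i \<in> {1..d}"
      have vt: "vv i Yt = t * vv i Y + (1-t) * vv i Y0" unfolding Yt_def by (rule vv_affine[OF Y Y0(1) i])
      show "(vv i Yt)^2 = (vv i Y0)^2 + 2*t*(vv i Y0 * e i) + t^2 * (e i)^2"
        unfolding vt e_def by (simp add: power2_eq_square algebra_simps)
    qed
    also have "\<dots> = NN Y0 + 2*t*S1 + t^2*S2"
      by (simp add: sum.distrib sum_distrib_left[symmetric] NN_def S1_def S2_def)
    finally have NNYt: "NN Yt = NN Y0 + 2*t*S1 + t^2*S2" .
    have "NN Yt \<ge> m" using m_le[OF YtQ] .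
    then have "t * (2*S1 + t*S2) > t * (- m/2)"
      using NNYt Y0(2) unfolding \<eta>_def by (simp add: algebra_simps power2_eq_square)
    then have h1: "2*S1 + t*S2 > - m/2" using mult_less_cancel_left_pos[OF t(1), of "- m/2" "2*S1 + t*S2"] by blast
    have "t * S2 \<le> (m / (4 * D2)) * S2" using t(3) S2ge by (intro mult_right_mono)
    also have "\<dots> \<le> (m / (4 * D2)) * D2" using S2le mpos D2pos by (intro mult_left_mono) auto
    also have "\<dots> = m / 4" using D2pos by simp
    finally have h2: "t * S2 \<le> m/4" .
    have "LL \<pi>0 Y = (\<Sum>i\<in>{1..d}. (vv i Y0)^2 + vv i Y0 * e i)"
      unfolding LL_def \<pi>0_def e_def by (intro sum.cong) (auto simp: power2_eq_square algebra_simps)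
    also have "\<dots> = NN Y0 + S1" by (simp add: sum.distrib NN_def S1_def)
    finally have "LL \<pi>0 Y = NN Y0 + S1" .
    moreover have "NN Y0 \<ge> m" using m_le[OF Y0(1)] .
    ultimately show ?thesis using h1 h2 mpos by linarith
  qed
  then show ?thesis using mpos by (intro exI[of _ \<pi>0] exI[of _ "m/2"]) auto
qed

end



lemma fatou_real:
  fixes g :: "nat \<Rightarrow> 'a \<Rightarrow> real"
  assumes gm: "\<And>j. g j \<in> borel_measurable M"
    and lim: "AE x in M. (\<lambda>j. g j x) \<longlonglongrightarrow> h x"
    and bnd: "\<And>j. j \<ge> N \<Longrightarrow> (\<integral>\<^sup>+x. ennreal (g j x) \<partial>M) \<le> C"
  shows "(\<integral>\<^sup>+x. ennreal (h x) \<partial>M) \<le> C"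
proof -
  have "(\<integral>\<^sup>+x. ennreal (h x) \<partial>M) = (\<integral>\<^sup>+x. liminf (\<lambda>j. ennreal (g j x)) \<partial>M)"
  proof (rule nn_integral_cong_AE)
    show "AE x in M. ennreal (h x) = liminf (\<lambda>j. ennreal (g j x))"
      using lim
    proof (rule eventually_mono)
      fix x assume "(\<lambda>j. g j x) \<longlonglongrightarrow> h x"
      then have "(\<lambda>j. ennreal (g j x)) \<longlonglongrightarrow> ennreal (h x)" by (rule tendsto_ennrealI)
      then show "ennreal (h x) = liminf (\<lambda>j. ennreal (g j x))"
        by (simp add: lim_imp_Liminf)
    qed
  qed
  also have "\<dots> \<le> liminf (\<lambda>j. \<integral>\<^sup>+x. ennreal (g j x) \<partial>M)"
    by (rule nn_integral_liminf) (use gm in measurable)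
  also have "\<dots> \<le> limsup (\<lambda>j. \<integral>\<^sup>+x. ennreal (g j x) \<partial>M)"
    by (rule Liminf_le_Limsup) simp
  also have "\<dots> \<le> C"
    by (rule Limsup_bounded) (use bnd in \<open>auto simp: eventually_sequentially\<close>)
  finally show ?thesis .
qed

context mkt begin

lemma vv_sq_le: "i \<in> {1..d} \<Longrightarrow> (vv i Y)^2 \<le> NN Y"
  unfolding NN_def by (rule member_le_sum) auto

end



context mkt begin

definition Phi :: "('a \<Rightarrow> real) \<Rightarrow> real" where "Phi Y = (\<integral>\<omega>. 1 / (1 + \<bar>Y \<omega>\<bar>) \<partial>M)"
definition tail :: "real \<Rightarrow> ('a \<Rightarrow> real) \<Rightarrow> real" where "tail Kc Y = (\<integral>\<omega>. (if \<bar>Y \<omega>\<bar> > Kc then \<bar>Y \<omega>\<bar> else 0) \<partial>M)"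

lemma Phi_int:
  fixes Y :: "'a \<Rightarrow> real"
  assumes [measurable]: "Y \<in> borel_measurable M"
  shows "integrable M (\<lambda>\<omega>. 1 / (1 + \<bar>Y \<omega>\<bar>))"
  by (rule integrable_const_bound[where B=1]) auto

lemma Phi_bnd:
  fixes Y :: "'a \<Rightarrow> real"
  assumes [measurable]: "Y \<in> borel_measurable M"
  shows "0 \<le> Phi Y" "Phi Y \<le> 1"
proof -
  show "0 \<le> Phi Y" unfolding Phi_def by (rule integral_nonneg_AE) auto
  have "Phi Y \<le> (\<integral>\<omega>. 1 \<partial>M)" unfolding Phi_def
    by (rule integral_mono) (auto intro!: Phi_int)
  then show "Phi Y \<le> 1" by (simp add: prob_space)
qed

lemma mid_in:
  assumes Y: "Y \<in> Q" and Z: "Z \<in> Q"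
  shows "(\<lambda>\<omega>. 1/2 * Y \<omega> + 1/2 * Z \<omega>) \<in> Q"
    and "NN (\<lambda>\<omega>. 1/2 * Y \<omega> + 1/2 * Z \<omega>) \<le> NN Y / 2 + NN Z / 2"
proof -
  have eq: "(\<lambda>\<omega>. 1/2 * Y \<omega> + (1 - 1/2) * Z \<omega>) = (\<lambda>\<omega>. 1/2 * Y \<omega> + 1/2 * Z \<omega>)" by simp
  show "(\<lambda>\<omega>. 1/2 * Y \<omega> + 1/2 * Z \<omega>) \<in> Q" using Qconv[OF Y Z, of "1/2"] eq by simp
  have vm: "vv i (\<lambda>\<omega>. 1/2 * Y \<omega> + 1/2 * Z \<omega>) = 1/2 * vv i Y + 1/2 * vv i Z" if i: "i \<in> {1..d}" for i
    using vv_affine[OF Y Z i, of "1/2"] eq by simp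
  have "NN (\<lambda>\<omega>. 1/2 * Y \<omega> + 1/2 * Z \<omega>) \<le> (\<Sum>i\<in>{1..d}. (vv i Y)^2 / 2 + (vv i Z)^2 / 2)"
    unfolding NN_def
  proof (rule sum_mono)
    fix i assume i: "i \<in> {1..d}"
    have "0 \<le> (vv i Y - vv i Z)^2" by simp
    then show "(vv i (\<lambda>\<omega>. 1/2 * Y \<omega> + 1/2 * Z \<omega>))^2 \<le> (vv i Y)^2 / 2 + (vv i Z)^2 / 2"
      unfolding vm[OF i] by (simp add: power2_eq_square algebra_simps)
  qed
  also have "\<dots> = NN Y / 2 + NN Z / 2"
    unfolding NN_def by (simp add: sum.distrib sum_divide_distrib)
  finally show "NN (\<lambda>\<omega>. 1/2 * Y \<omega> + 1/2 * Z \<omega>) \<le> NN Y / 2 + NN Z / 2" .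
qed

lemma pair_est:
  assumes Y: "Y \<in> Q" and Z: "Z \<in> Q" and Kc: "Kc > 0" and e1: "e1 > 0"
  shows "(\<integral>\<omega>. \<bar>Y \<omega> - Z \<omega>\<bar> \<partial>M) \<le> e1 + 4*(1+Kc)^3/e1 * (Phi Y / 2 + Phi Z / 2 - Phi (\<lambda>\<omega>. 1/2 * Y \<omega> + 1/2 * Z \<omega>)) + tail Kc Y + tail Kc Z"
proof -
  have Ym[measurable]: "Y \<in> borel_measurable M" using Qprops(4)[OF Y] .
  have Zm[measurable]: "Z \<in> borel_measurable M" using Qprops(4)[OF Z] .
  have Yi: "integrable M Y" using Qprops(1)[OF Y] .
  have Zi: "integrable M Z" using Qprops(1)[OF Z] .
  define g where "g y z = 1/(2*(1+\<bar>y\<bar>)) + 1/(2*(1+\<bar>z\<bar>)) - 1/(1+\<bar>1/2*y + 1/2*z\<bar>)" for y z :: real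
  have gi: "integrable M (\<lambda>\<omega>. g (Y \<omega>) (Z \<omega>))"
  proof -
    have "integrable M (\<lambda>\<omega>. 1/2 * (1/(1+\<bar>Y \<omega>\<bar>)) + 1/2 * (1/(1+\<bar>Z \<omega>\<bar>)) - 1/(1+\<bar>1/2*Y \<omega> + 1/2*Z \<omega>\<bar>))"
      by (intro Bochner_Integration.integrable_diff Bochner_Integration.integrable_add integrable_mult_right Phi_int) measurable
    then show ?thesis unfolding g_def by simp
  qed
  have gint: "(\<integral>\<omega>. g (Y \<omega>) (Z \<omega>) \<partial>M) = Phi Y / 2 + Phi Z / 2 - Phi (\<lambda>\<omega>. 1/2 * Y \<omega> + 1/2 * Z \<omega>)"
  proof -
    have i1: "integrable M (\<lambda>\<omega>. 1/(1+\<bar>Y \<omega>\<bar>))" by (rule Phi_int) measurable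
    have i2: "integrable M (\<lambda>\<omega>. 1/(1+\<bar>Z \<omega>\<bar>))" by (rule Phi_int) measurable
    have i3: "integrable M (\<lambda>\<omega>. 1/(1+\<bar>1/2*Y \<omega> + 1/2*Z \<omega>\<bar>))" by (rule Phi_int) measurable
    define f1 where "f1 = (\<lambda>\<omega>. 1/(1+\<bar>Y \<omega>\<bar>))"
    define f2 where "f2 = (\<lambda>\<omega>. 1/(1+\<bar>Z \<omega>\<bar>))"
    define f3 where "f3 = (\<lambda>\<omega>. 1/(1+\<bar>1/2*Y \<omega> + 1/2*Z \<omega>\<bar>))"
    have "(\<integral>\<omega>. g (Y \<omega>) (Z \<omega>) \<partial>M) = (\<integral>\<omega>. 1/2 * f1 \<omega> + 1/2 * f2 \<omega> - f3 \<omega> \<partial>M)"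
      unfolding g_def f1_def f2_def f3_def by (rule Bochner_Integration.integral_cong) auto
    also have "\<dots> = 1/2 * (\<integral>\<omega>. f1 \<omega> \<partial>M) + 1/2 * (\<integral>\<omega>. f2 \<omega> \<partial>M) - (\<integral>\<omega>. f3 \<omega> \<partial>M)"
      using i1 i2 i3 unfolding f1_def[symmetric] f2_def[symmetric] f3_def[symmetric] by simp
    also have "\<dots> = 1/2 * Phi Y + 1/2 * Phi Z - Phi (\<lambda>\<omega>. 1/2 * Y \<omega> + 1/2 * Z \<omega>)"
      unfolding Phi_def f1_def f2_def f3_def by simp
    finally show ?thesis by simp
  qed
  define T where "T y = (if \<bar>y\<bar> > Kc then \<bar>y\<bar> else 0)" for y :: real
  have Ti: "integrable M (\<lambda>\<omega>. T (Y \<omega>))" "integrable M (\<lambda>\<omega>. T (Z \<omega>))"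
    unfolding T_def using tail_integrable[OF Yi] tail_integrable[OF Zi] by auto
  have "(\<integral>\<omega>. \<bar>Y \<omega> - Z \<omega>\<bar> \<partial>M) \<le> (\<integral>\<omega>. e1 + 4*(1+Kc)^3/e1 * g (Y \<omega>) (Z \<omega>) + T (Y \<omega>) + T (Z \<omega>) \<partial>M)"
  proof (rule integral_mono_AE)
    show "integrable M (\<lambda>\<omega>. \<bar>Y \<omega> - Z \<omega>\<bar>)" using Yi Zi by auto
    show "integrable M (\<lambda>\<omega>. e1 + 4*(1+Kc)^3/e1 * g (Y \<omega>) (Z \<omega>) + T (Y \<omega>) + T (Z \<omega>))"
      using gi Ti by auto
    show "AE \<omega> in M. \<bar>Y \<omega> - Z \<omega>\<bar> \<le> e1 + 4*(1+Kc)^3/e1 * g (Y \<omega>) (Z \<omega>) + T (Y \<omega>) + T (Z \<omega>)"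
      using Qprops(2)[OF Y] Qprops(2)[OF Z]
    proof eventually_elim
      case (elim \<omega>)
      show ?case unfolding g_def T_def by (rule ptw[OF elim Kc e1])
    qed
  qed
  also have "\<dots> = e1 + 4*(1+Kc)^3/e1 * (\<integral>\<omega>. g (Y \<omega>) (Z \<omega>) \<partial>M) + (\<integral>\<omega>. T (Y \<omega>) \<partial>M) + (\<integral>\<omega>. T (Z \<omega>) \<partial>M)"
    using gi Ti by (simp add: prob_space)
  finally show ?thesis unfolding gint tail_def T_def .
qed

end



context mkt begin

lemma tail_mono:
  assumes "Y \<in> Q" "Kc0 \<le> Kc"
  shows "tail Kc Y \<le> tail Kc0 Y"
  unfolding tail_def using assms Qprops(1)[OF assms(1)]
  by (intro integral_mono tail_integrable) auto

lemma L1_cauchy_seq: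
  assumes small: "\<forall>\<delta>>0. \<exists>Y\<in>Q. NN Y \<le> \<delta>"
  shows "\<exists>Zs. (\<forall>n. Zs n \<in> Q \<and> NN (Zs n) \<le> 1 / real (Suc n)) \<and>
     (\<forall>e>0. \<exists>N. \<forall>i\<ge>N. \<forall>j\<ge>N. (\<integral>\<omega>. \<bar>Zs i \<omega> - Zs j \<omega>\<bar> \<partial>M) < e)"
proof -
  define K where "K n = {Y\<in>Q. NN Y \<le> 1 / real (Suc n)}" for n
  have Kne: "K n \<noteq> {}" for n
  proof -
    have "1 / real (Suc n) > 0" by simp
    then obtain Y where "Y \<in> Q" "NN Y \<le> 1 / real (Suc n)" using small by blast
    then show ?thesis unfolding K_def by blast
  qed
  have Ksub: "K m \<subseteq> K n" if "n \<le> m" for n m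
  proof -
    have "1 / real (Suc m) \<le> 1 / real (Suc n)" using that by (simp add: frac_le)
    then show ?thesis unfolding K_def by auto
  qed
  define a where "a n = Inf (Phi ` K n)" for n
  have bddK: "bdd_below (Phi ` K n)" for n
    using Phi_bnd Qprops(4) unfolding K_def by (auto intro!: bdd_belowI[of _ 0])
  have a_le: "a n \<le> Phi Y" if "Y \<in> K n" for n Y
    unfolding a_def using bddK that by (auto intro: cInf_lower)
  have a_mono: "a n \<le> a m" if "n \<le> m" for n m
    unfolding a_def using Kne bddK Ksub[OF that] by (intro cInf_superset_mono) auto
  have a_bnd: "a n \<le> 1" for n
  proof -
    obtain Y where "Y \<in> K n" using Kne by blast
    then show ?thesis using a_le[of Y n] Phi_bnd(2)[OF Qprops(4)] unfolding K_def by force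
  qed
  have "a \<longlonglongrightarrow> (SUP i. a i)"
    by (rule LIMSEQ_incseq_SUP) (use a_bnd a_mono in \<open>auto simp: incseq_def intro!: bdd_aboveI\<close>)
  then have aC: "Cauchy a" by (rule LIMSEQ_imp_Cauchy)
  have "\<forall>n. \<exists>Y. Y \<in> K n \<and> Phi Y < a n + 1 / real (Suc n)"
  proof
    fix n
    have "Inf (Phi ` K n) < a n + 1 / real (Suc n)" unfolding a_def by simp
    then show "\<exists>Y. Y \<in> K n \<and> Phi Y < a n + 1 / real (Suc n)"
      using cInf_lessD[of "Phi ` K n"] Kne by blast
  qed
  then obtain Zs where Zs: "\<And>n. Zs n \<in> K n" "\<And>n. Phi (Zs n) < a n + 1 / real (Suc n)" by metis
  have ZsQ: "Zs n \<in> Q" for n using Zs(1) unfolding K_def by auto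
  have ZsN: "NN (Zs n) \<le> 1 / real (Suc n)" for n using Zs(1) unfolding K_def by auto
  have gap: "Phi (Zs n) / 2 + Phi (Zs m) / 2 - Phi (\<lambda>\<omega>. 1/2 * Zs n \<omega> + 1/2 * Zs m \<omega>)
      < (a m - a n) / 2 + 1 / real (Suc n)" if nm: "n \<le> m" for n m
  proof -
    have mq: "(\<lambda>\<omega>. 1/2 * Zs n \<omega> + 1/2 * Zs m \<omega>) \<in> Q" using mid_in(1)[OF ZsQ ZsQ] .
    have "NN (\<lambda>\<omega>. 1/2 * Zs n \<omega> + 1/2 * Zs m \<omega>) \<le> NN (Zs n) / 2 + NN (Zs m) / 2"
      using mid_in(2)[OF ZsQ ZsQ] .
    also have "\<dots> \<le> 1 / real (Suc n)"
    proof -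
      have "1 / real (Suc m) \<le> 1 / real (Suc n)" using nm by (simp add: frac_le)
      then show ?thesis using ZsN[of n] ZsN[of m] by linarith
    qed
    finally have "(\<lambda>\<omega>. 1/2 * Zs n \<omega> + 1/2 * Zs m \<omega>) \<in> K n" using mq unfolding K_def by auto
    then have "a n \<le> Phi (\<lambda>\<omega>. 1/2 * Zs n \<omega> + 1/2 * Zs m \<omega>)" by (rule a_le)
    moreover have "1 / real (Suc m) \<le> 1 / real (Suc n)" using nm by (simp add: frac_le)
    moreover have aux: "\<And>p q r an am sn sm :: real. an \<le> r \<Longrightarrow> sm \<le> sn \<Longrightarrow> p < an + sn \<Longrightarrow> q < am + sm \<Longrightarrow> p/2 + q/2 - r < (am - an)/2 + sn"
      by (simp add: field_simps)
    ultimately show ?thesis using Zs(2)[of n] Zs(2)[of m] by blast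
  qed
  have cauchy: "\<exists>N. \<forall>i\<ge>N. \<forall>j\<ge>N. (\<integral>\<omega>. \<bar>Zs i \<omega> - Zs j \<omega>\<bar> \<partial>M) < e" if e: "e > 0" for e
  proof -
    obtain Kc0 where Kc0: "\<forall>f\<in>Q. (\<integral>\<omega>. (if \<bar>f \<omega>\<bar> > Kc0 then \<bar>f \<omega>\<bar> else 0) \<partial>M) \<le> e/4"
      using UIQ e unfolding unif_integrable_def by (meson divide_pos_pos zero_less_numeral)
    define Kc where "Kc = max Kc0 1"
    have Kc: "Kc > 0" unfolding Kc_def by simp
    have tl: "tail Kc Y \<le> e/4" if "Y \<in> Q" for Y
      using tail_mono[OF that, of Kc0 Kc] Kc0 that unfolding Kc_def tail_def by force
    define e1 where "e1 = e/4"
    have e1: "e1 > 0" unfolding e1_def using e by simp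
    define C where "C = 4*(1+Kc)^3/e1"
    have Cpos: "C > 0" unfolding C_def using Kc e1 by simp
    define \<eta> where "\<eta> = e / (8 * C)"
    have eta: "\<eta> > 0" unfolding \<eta>_def using e Cpos by simp
    obtain N1 where N1: "\<And>m n. m \<ge> N1 \<Longrightarrow> n \<ge> N1 \<Longrightarrow> norm (a m - a n) < \<eta>"
      using CauchyD[OF aC, of \<eta>] eta by blast
    obtain N2 :: nat where N2: "N2 > 0" "inverse (real N2) < \<eta> / 2"
      using ex_inverse_of_nat_less[of "\<eta>/2"] eta by auto
    define N where "N = max N1 N2"
    have est: "(\<integral>\<omega>. \<bar>Zs n \<omega> - Zs m \<omega>\<bar> \<partial>M) < e" if nm: "n \<le> m" "n \<ge> N" for n m
    proof -
      have "(\<integral>\<omega>. \<bar>Zs n \<omega> - Zs m \<omega>\<bar> \<partial>M) \<le> e1 + C * (Phi (Zs n) / 2 + Phi (Zs m) / 2 - Phi (\<lambda>\<omega>. 1/2 * Zs n \<omega> + 1/2 * Zs m \<omega>)) + tail Kc (Zs n) + tail Kc (Zs m)"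
        unfolding C_def by (rule pair_est[OF ZsQ ZsQ Kc e1])
      moreover have "C * (Phi (Zs n) / 2 + Phi (Zs m) / 2 - Phi (\<lambda>\<omega>. 1/2 * Zs n \<omega> + 1/2 * Zs m \<omega>)) < C * \<eta>"
      proof -
        have "norm (a m - a n) < \<eta>" using N1 nm unfolding N_def by auto
        moreover have "1 / real (Suc n) < \<eta> / 2"
        proof -
          have "1 / real (Suc n) \<le> inverse (real N2)"
            using nm N2(1) unfolding N_def by (simp add: inverse_eq_divide frac_le)
          then show ?thesis using N2(2) by linarith
        qed
        moreover have aux2: "\<And>x s \<eta>::real. norm x < \<eta> \<Longrightarrow> s < \<eta>/2 \<Longrightarrow> x/2 + s < \<eta>"
          by (auto simp: abs_less_iff)
        ultimately have "(a m - a n) / 2 + 1 / real (Suc n) < \<eta>" by blast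
        then show ?thesis using gap[OF nm(1)] Cpos by (intro mult_strict_left_mono) auto
      qed
      moreover have "C * \<eta> = e / 8" unfolding \<eta>_def using Cpos by simp
      moreover have "e1 = e/4" unfolding e1_def ..
      ultimately show ?thesis using tl[OF ZsQ[of n]] tl[OF ZsQ[of m]] e by linarith
    qed
    have "(\<integral>\<omega>. \<bar>Zs i \<omega> - Zs j \<omega>\<bar> \<partial>M) < e" if "i \<ge> N" "j \<ge> N" for i j
    proof (cases "i \<le> j")
      case True then show ?thesis using est that by auto
    next
      case False
      then have "(\<integral>\<omega>. \<bar>Zs j \<omega> - Zs i \<omega>\<bar> \<partial>M) < e" using est that by auto
      then show ?thesis by (simp add: abs_minus_commute)
    qed
    then show ?thesis by blast
  qed
  show ?thesis using ZsQ ZsN cauchy by blast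
qed

end



context mkt begin

lemma caseA:
  assumes small: "\<forall>\<delta>>0. \<exists>Y\<in>Q. NN Y \<le> \<delta>"
  shows "L1_closure M Q \<inter> mart_densities M d r R \<noteq> {}"
proof -
  obtain Zs where ZsQ: "\<And>n. Zs n \<in> Q" and ZsN: "\<And>n. NN (Zs n) \<le> 1 / real (Suc n)"
    and cauchy: "\<And>e. e > 0 \<Longrightarrow> \<exists>N. \<forall>i\<ge>N. \<forall>j\<ge>N. (\<integral>\<omega>. \<bar>Zs i \<omega> - Zs j \<omega>\<bar> \<partial>M) < e"
    using L1_cauchy_seq[OF small] by blast
  have Zsm[measurable]: "\<And>n. Zs n \<in> borel_measurable M" using Qprops(4)[OF ZsQ] .
  obtain \<sigma> where \<sigma>: "strict_mono \<sigma>" and aeC: "AE x in M. Cauchy (\<lambda>i. Zs (\<sigma> i) x)"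
  proof (rule cauchy_L1_AE_cauchy_subseq[where s=Zs and M=M])
    show "\<And>n. integrable M (Zs n)" using Qprops(1)[OF ZsQ] .
    show "\<exists>N. \<forall>i\<ge>N. \<forall>j\<ge>N. LINT x|M. norm (Zs i x - Zs j x) < e" if "e > 0" for e
      using cauchy[OF that] by simp
  qed blast
  define u where "u k = Zs (\<sigma> k)" for k
  have uQ: "u k \<in> Q" for k unfolding u_def by (rule ZsQ)
  have um[measurable]: "u k \<in> borel_measurable M" for k unfolding u_def by simp
  have ui: "integrable M (u k)" for k using Qprops(1)[OF uQ] .
  define Z where "Z x = lim (\<lambda>k. u k x)" for x
  have Zm[measurable]: "Z \<in> borel_measurable M" unfolding Z_def by measurable
  have aeL: "AE x in M. (\<lambda>k. u k x) \<longlonglongrightarrow> Z x"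
    using aeC
  proof (rule eventually_mono)
    fix x assume "Cauchy (\<lambda>i. Zs (\<sigma> i) x)"
    then have "convergent (\<lambda>k. u k x)" unfolding u_def by (simp add: Cauchy_convergent_iff)
    then show "(\<lambda>k. u k x) \<longlonglongrightarrow> Z x" unfolding Z_def by (simp add: convergent_LIMSEQ_iff)
  qed
  have "(\<integral>\<^sup>+x. ennreal \<bar>Z x\<bar> \<partial>M) \<le> 1"
  proof (rule fatou_real[where g="\<lambda>k x. \<bar>u k x\<bar>" and N=0])
    show "AE x in M. (\<lambda>k. \<bar>u k x\<bar>) \<longlonglongrightarrow> \<bar>Z x\<bar>"
      using aeL by (rule eventually_mono) (rule tendsto_rabs)
    fix k
    have "(\<integral>\<^sup>+x. ennreal \<bar>u k x\<bar> \<partial>M) = ennreal (\<integral>x. \<bar>u k x\<bar> \<partial>M)"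
      by (rule nn_integral_eq_integral) (use ui in auto)
    then show "(\<integral>\<^sup>+x. ennreal \<bar>u k x\<bar> \<partial>M) \<le> 1" using Qabs[OF uQ] by simp
  qed measurable
  then have "(\<integral>\<^sup>+x. ennreal \<bar>Z x\<bar> \<partial>M) < \<infinity>" by (rule order.strict_trans1) simp
  then have Zi: "integrable M Z"
    by (intro integrableI_bounded) auto
  have L1e: "\<exists>N. \<forall>k\<ge>N. (\<integral>x. \<bar>u k x - Z x\<bar> \<partial>M) \<le> e" if e: "e > 0" for e
  proof -
    obtain N where N: "\<And>i j. i \<ge> N \<Longrightarrow> j \<ge> N \<Longrightarrow> (\<integral>\<omega>. \<bar>Zs i \<omega> - Zs j \<omega>\<bar> \<partial>M) < e"
      using cauchy[OF e] by blast
    have "(\<integral>x. \<bar>u k x - Z x\<bar> \<partial>M) \<le> e" if k: "k \<ge> N" for k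
    proof -
      have "(\<integral>\<^sup>+x. ennreal \<bar>u k x - Z x\<bar> \<partial>M) \<le> ennreal e"
      proof (rule fatou_real[where g="\<lambda>j x. \<bar>u k x - u j x\<bar>" and N=N])
        show "AE x in M. (\<lambda>j. \<bar>u k x - u j x\<bar>) \<longlonglongrightarrow> \<bar>u k x - Z x\<bar>"
          using aeL by (rule eventually_mono) (intro tendsto_rabs tendsto_diff tendsto_const)
        fix j assume j: "j \<ge> N"
        have "(\<integral>\<^sup>+x. ennreal \<bar>u k x - u j x\<bar> \<partial>M) = ennreal (\<integral>x. \<bar>u k x - u j x\<bar> \<partial>M)"
          by (rule nn_integral_eq_integral) (use ui in auto)
        moreover have "(\<integral>x. \<bar>u k x - u j x\<bar> \<partial>M) < e"
        proof -
          have "\<sigma> k \<ge> N" using k seq_suble[OF \<sigma>, of k] by linarith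
          moreover have "\<sigma> j \<ge> N" using j seq_suble[OF \<sigma>, of j] by linarith
          ultimately show ?thesis unfolding u_def by (rule N)
        qed
        ultimately show "(\<integral>\<^sup>+x. ennreal \<bar>u k x - u j x\<bar> \<partial>M) \<le> ennreal e"
          by (simp add: ennreal_leI)
      qed measurable
      moreover have "(\<integral>\<^sup>+x. ennreal \<bar>u k x - Z x\<bar> \<partial>M) = ennreal (\<integral>x. \<bar>u k x - Z x\<bar> \<partial>M)"
        by (rule nn_integral_eq_integral) (use ui Zi in auto)
      ultimately show ?thesis using e by (simp add: ennreal_le_iff)
    qed
    then show ?thesis by blast
  qed
  have Lim: "(\<lambda>k. \<integral>x. \<bar>u k x - Z x\<bar> \<partial>M) \<longlonglongrightarrow> 0"
  proof (rule LIMSEQ_I)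
    fix e :: real assume e: "e > 0"
    obtain N where "\<forall>k\<ge>N. (\<integral>x. \<bar>u k x - Z x\<bar> \<partial>M) \<le> e/2" using L1e[of "e/2"] e by auto
    then show "\<exists>N. \<forall>k\<ge>N. norm ((\<integral>x. \<bar>u k x - Z x\<bar> \<partial>M) - 0) < e" using e by force
  qed
  have Zcl: "Z \<in> L1_closure M Q"
    unfolding L1_closure_def
  proof (intro CollectI conjI allI impI Zi)
    fix e :: real assume e: "e > 0"
    obtain N where "\<forall>k\<ge>N. (\<integral>x. \<bar>u k x - Z x\<bar> \<partial>M) \<le> e/2" using L1e[of "e/2"] e by auto
    then have "(\<integral>x. \<bar>u N x - Z x\<bar> \<partial>M) \<le> e/2" by blast
    then have "(\<integral>x. \<bar>Z x - u N x\<bar> \<partial>M) \<le> e/2" by (simp add: abs_minus_commute)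
    then have "(\<integral>x. \<bar>Z x - u N x\<bar> \<partial>M) < e" using e by linarith
    then show "\<exists>Y\<in>Q. (\<integral>\<omega>. \<bar>Z \<omega> - Y \<omega>\<bar> \<partial>M) < e" using uQ by blast
  qed
  have Znn: "AE x in M. Z x \<ge> 0"
  proof -
    have "AE x in M. \<forall>k. u k x \<ge> 0" using Qprops(2)[OF uQ] by (simp add: AE_all_countable)
    then show ?thesis using aeL
    proof eventually_elim
      case (elim x)
      then show ?case by (intro LIMSEQ_le_const[of "\<lambda>k. u k x"]) auto
    qed
  qed
  have Zint1: "(\<integral>x. Z x \<partial>M) = 1"
  proof -
    have b: "\<bar>1 - (\<integral>x. Z x \<partial>M)\<bar> \<le> (\<integral>x. \<bar>u k x - Z x\<bar> \<partial>M)" for k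
    proof -
      have "1 - (\<integral>x. Z x \<partial>M) = (\<integral>x. u k x - Z x \<partial>M)"
        using Qprops(3)[OF uQ] ui Zi by simp
      then show ?thesis by (simp add: integral_abs_bound)
    qed
    have "\<bar>1 - (\<integral>x. Z x \<partial>M)\<bar> \<le> 0"
      by (rule LIMSEQ_le_const[OF Lim]) (use b in auto)
    then show ?thesis by simp
  qed
  have Zden: "Z \<in> densities M" unfolding densities_def using Zi Znn Zint1 by auto
  obtain BW where BW: "\<forall>Y\<in>Q. \<forall>i\<in>{1..d}. (\<integral>\<omega>. \<bar>Y \<omega> * (R i \<omega> - r)\<bar> \<partial>M) \<le> BW"
    using YW_bound by blast
  have Zmart: "integrable M (\<lambda>\<omega>. Z \<omega> * (R i \<omega> - r)) \<and> (\<integral>\<omega>. Z \<omega> * (R i \<omega> - r) \<partial>M) = 0"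
    if i: "i \<in> {1..d}" for i
  proof -
    have Rm[measurable]: "R i \<in> borel_measurable M" using Rmeas[OF i] .
    have "(\<integral>\<^sup>+x. ennreal \<bar>Z x * (R i x - r)\<bar> \<partial>M) \<le> ennreal BW"
    proof (rule fatou_real[where g="\<lambda>k x. \<bar>u k x * (R i x - r)\<bar>" and N=0])
      show "AE x in M. (\<lambda>k. \<bar>u k x * (R i x - r)\<bar>) \<longlonglongrightarrow> \<bar>Z x * (R i x - r)\<bar>"
        using aeL by (rule eventually_mono) (intro tendsto_rabs tendsto_mult tendsto_const)
      fix k
      have "(\<integral>\<^sup>+x. ennreal \<bar>u k x * (R i x - r)\<bar> \<partial>M) = ennreal (\<integral>x. \<bar>u k x * (R i x - r)\<bar> \<partial>M)"
        by (rule nn_integral_eq_integral) (use YWint[OF uQ i] in auto)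
      then show "(\<integral>\<^sup>+x. ennreal \<bar>u k x * (R i x - r)\<bar> \<partial>M) \<le> ennreal BW"
        using BW uQ i by (simp add: ennreal_leI)
    qed measurable
    then have "(\<integral>\<^sup>+x. ennreal \<bar>Z x * (R i x - r)\<bar> \<partial>M) < \<infinity>" by (rule order.strict_trans1) simp
    then have ZW: "integrable M (\<lambda>\<omega>. Z \<omega> * (R i \<omega> - r))"
      by (intro integrableI_bounded) auto
    have c1: "(\<lambda>k. vv i (u k)) \<longlonglongrightarrow> (\<integral>\<omega>. Z \<omega> * (R i \<omega> - r) \<partial>M)"
      by (rule conv[OF uQ Zi ZW Lim i])
    have c2: "(\<lambda>k. (vv i (u k))^2) \<longlonglongrightarrow> (\<integral>\<omega>. Z \<omega> * (R i \<omega> - r) \<partial>M)^2"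
      by (intro tendsto_power c1)
    have c3: "(\<lambda>k. 1 / real (Suc k)) \<longlonglongrightarrow> 0"
      using LIMSEQ_inverse_real_of_nat by (simp add: inverse_eq_divide)
    have le: "(vv i (u k))^2 \<le> 1 / real (Suc k)" for k
    proof -
      have "(vv i (u k))^2 \<le> NN (u k)" by (rule vv_sq_le[OF i])
      also have "\<dots> \<le> 1 / real (Suc (\<sigma> k))" unfolding u_def by (rule ZsN)
      also have "\<dots> \<le> 1 / real (Suc k)" using seq_suble[OF \<sigma>, of k] by (simp add: frac_le)
      finally show ?thesis .
    qed
    have "(\<integral>\<omega>. Z \<omega> * (R i \<omega> - r) \<partial>M)^2 \<le> 0"
      by (rule LIMSEQ_le[OF c2 c3]) (use le in auto)
    then show ?thesis using ZW by simp
  qed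
  have "Z \<in> mart_densities M d r R" unfolding mart_densities_def using Zden Zmart by auto
  then show ?thesis using Zcl by blast
qed

end

theorem theorem4p15:
  fixes M :: "'a measure" and d :: nat and r :: real
    and S0 :: "nat \<Rightarrow> real" and S1 :: "nat \<Rightarrow> 'a \<Rightarrow> real"
    and Q :: "('a \<Rightarrow> real) set"
  assumes "prob_space M"
    and "r > -1"
    and "\<forall>i\<in>{1..d}. S0 i > 0"
    and "\<forall>i\<in>{1..d}. S1 i \<in> borel_measurable M"
    and "nonredundant M d r S0 S1"
    and "\<forall>i\<in>{1..d}. integrable M (ret S0 S1 i)"
    and "\<exists>i\<in>{1..d}. (\<integral>\<omega>. ret S0 S1 i \<omega> \<partial>M) \<noteq> r"
    and "Q \<subseteq> densities M"
    and "\<forall>Y\<in>Q. \<forall>Z\<in>Q. \<forall>t::real. 0 \<le> t \<and> t \<le> 1 \<longrightarrow> (\<lambda>\<omega>. t * Y \<omega> + (1 - t) * Z \<omega>) \<in> Q"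
    and "(\<lambda>_. 1) \<in> Q"
    and "unif_integrable M Q"
    and "\<forall>i\<in>{1..d}. unif_integrable M ((\<lambda>Z \<omega>. ret S0 S1 i \<omega> * Z \<omega>) ` Q)"
  shows "\<not> strong_rho_arbitrage M Q d r (ret S0 S1)
         \<longleftrightarrow> L1_closure M Q \<inter> mart_densities M d r (ret S0 S1) \<noteq> {}"
proof -
  have mk: "mkt M d (ret S0 S1) Q"
    unfolding mkt_def mkt_axioms_def using assms by auto
  interpret mkt M d r "ret S0 S1" Q by (rule mk)
  show ?thesis
  proof
    assume nsa: "\<not> strong_rho_arbitrage M Q d r (ret S0 S1)"
    show "L1_closure M Q \<inter> mart_densities M d r (ret S0 S1) \<noteq> {}"
    proof (cases "\<forall>\<delta>>0. \<exists>Y\<in>Q. NN Y \<le> \<delta>")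
      case True
      then show ?thesis by (rule caseA)
    next
      case False
      then obtain \<delta> where "\<delta> > 0" "\<forall>Y\<in>Q. NN Y > \<delta>" by (auto simp: not_le)
      then obtain \<pi>0 m where "m > 0" "\<forall>Y\<in>Q. LL \<pi>0 Y \<ge> m" using caseB by blast
      then have "strong_rho_arbitrage M Q d r (ret S0 S1)" by (rule arb)
      then show ?thesis using nsa by blast
    qed
  next
    assume "L1_closure M Q \<inter> mart_densities M d r (ret S0 S1) \<noteq> {}"
    then show "\<not> strong_rho_arbitrage M Q d r (ret S0 S1)" by (rule noarb)
  qed
qed

end
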